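(* For every integer $t\ge 1$ and every even integer $j$, the limit $$g_{22}(t,j)=\lim_{L\to\infty,\ L\text{ even}}\mathbb{E}_L\big[(h^{2t+2}_j-h^{2t}_j)(h^2_0-h^0_0)\big]$$ exists and $$g_{22}(t,j)=-\tfrac14\big[g_{11}(t-1,j)-g_{11}(t,j)\big],$$ where $g_{11}(s,j)=\frac{2^{-2s+1}(2s)!}{(s-\frac{j}{2})!(s+\frac{j}{2})!}$ for $|j|\le 2s$ and $g_{11}(s,j)=0$ for $|j|>2s$ (for $s\ge0$, $j$ even).
   Context: Let $L\ge 2$ be an even integer and index sites by $i\in\mathbb{Z}/L\mathbb{Z}$. The initial interface $h^0$ is "distributed" according to the un-normalized measure $\mu(dh^0)=\prod_i e^{-\frac12(h^0_{i+1}-h^0_i)^2}\,dh^0_i$; concretely, only height differences are meaningful and the increment vector $(h^0_{i+1}-h^0_i)_i$ has the law of i.i.d. standard Gaussians conditioned on having sum zero. Dynamics: for $t\ge1$, independently for each $i$ with $i+t$ even, $h^t_i=\tfrac12(h^{t-1}_{i-1}+h^{t-1}_{i+1})+\xi^t_i$ with $\xi^t_i$ independent centered Gaussians of variance $1/2$; $h^t_i=h^{t-1}_i$ for $i+t$ odd. $\mathbb{E}_L$ is expectation for this process on $\mathbb{Z}/L\mathbb{Z}$. *)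

theory Defs
  imports "HOL-Probability.Probability"
begin

text \<open>Coordinates (0,k) are i.i.d. standard Gaussians eta_k (used for the
  initial increments), coordinates (t,i) with t \<ge> 1 are the noises xi^t_i, centered
  Gaussians of variance 1/2 (standard deviation sqrt(1/2)).\<close>

definition noise_space :: "(nat \<times> nat \<Rightarrow> real) measure" where
  "noise_space = (\<Pi>\<^sub>M p\<in>(UNIV :: (nat \<times> nat) set).
      (if fst p = 0 then density lborel (normal_density 0 1)
       else density lborel (normal_density 0 (sqrt (1/2)))))"

definition site :: "nat \<Rightarrow> int \<Rightarrow> nat" where
  "site L i = nat (i mod int L)"

text \<open>Initial interface: increments h^0_{k+1}-h^0_k = eta_k - mean(eta), k<L, which
  is the law of i.i.d. standard Gaussians conditioned on sum zero; the height is
  pinned by h^0_0 = 0 (only height differences are meaningful, and the dynamics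
  commutes with global shifts).\<close>
fun hgt :: "nat \<Rightarrow> (nat \<times> nat \<Rightarrow> real) \<Rightarrow> nat \<Rightarrow> int \<Rightarrow> real" where
  "hgt L \<omega> 0 i =
     (\<Sum>k<site L i. \<omega> (0, k) - (\<Sum>m<L. \<omega> (0, m)) / real L)"
| "hgt L \<omega> (Suc t) i =
     (if even (i + int (Suc t))
      then (hgt L \<omega> t (i - 1) + hgt L \<omega> t (i + 1)) / 2 + \<omega> (Suc t, site L i)
      else hgt L \<omega> t i)"

definition g11 :: "nat \<Rightarrow> int \<Rightarrow> real" where
  "g11 s j = (if \<bar>j\<bar> \<le> 2 * int s
     then 2 / 4 ^ s * fact (2 * s) /
          (fact (nat (int s - j div 2)) * fact (nat (int s + j div 2)))
     else 0)"

end

theory Submission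
  imports Defs
begin


definition sg :: "nat \<times> nat \<Rightarrow> real" where "sg p = (if fst p = 0 then 1 else sqrt (1/2))"
definition MM :: "nat \<times> nat \<Rightarrow> real measure" where "MM p = density lborel (normal_density 0 (sg p))"
definition vv :: "nat \<times> nat \<Rightarrow> real" where "vv p = (if fst p = 0 then 1 else 1/2)"

lemma sg_pos: "0 < sg p" by (simp add: sg_def)
lemma vv_sg: "vv p = (sg p)^2" by (simp add: vv_def sg_def)

lemma NS: "noise_space = PiM UNIV MM"
  unfolding noise_space_def MM_def sg_def by (intro PiM_cong) auto

lemma prob_MM: "prob_space (MM p)"
  unfolding MM_def using prob_space_normal_density[OF sg_pos] .

interpretation PP: product_prob_space MM UNIV
proof -
  show "product_prob_space MM"
    by (intro product_prob_space.intro product_sigma_finite.intro product_prob_space_axioms.intro)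
       (auto intro: prob_MM prob_space_imp_sigma_finite)
qed

lemma mom1: "integrable (MM p) (\<lambda>x. x) \<and> integral\<^sup>L (MM p) (\<lambda>x. x) = 0"
proof -
  have s: "0 < sg p" by (rule sg_pos)
  have "integrable lborel (\<lambda>x. normal_density 0 (sg p) x * x)"
    using integrable_normal_moment[OF s, of 0 1] by simp
  moreover have "integral\<^sup>L lborel (\<lambda>x. normal_density 0 (sg p) x * x) = 0"
    using integral_normal_moment_nz_1[OF s, of 0] by simp
  ultimately show ?thesis unfolding MM_def
    by (simp add: integrable_density integral_density)
qed

lemma mom2: "integrable (MM p) (\<lambda>x. x * x) \<and> integral\<^sup>L (MM p) (\<lambda>x. x * x) = vv p"
proof -
  have s: "0 < sg p" by (rule sg_pos)
  have "integrable lborel (\<lambda>x. normal_density 0 (sg p) x * (x*x))"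
    using integrable_normal_moment[OF s, of 0 2] by (simp add: power2_eq_square)
  moreover have "integral\<^sup>L lborel (\<lambda>x. normal_density 0 (sg p) x * (x*x)) = vv p"
    using integral_normal_moment_even[OF s, of 0 1] by (simp add: power2_eq_square vv_sg)
  ultimately show ?thesis unfolding MM_def
    by (simp add: integrable_density integral_density)
qed

lemma prodint:
  fixes f :: "nat \<times> nat \<Rightarrow> real \<Rightarrow> real"
  assumes J: "finite J" and f: "\<And>i. i \<in> J \<Longrightarrow> integrable (MM i) (f i)"
  shows "integrable (PiM UNIV MM) (\<lambda>\<omega>. \<Prod>i\<in>J. f i (\<omega> i))
     \<and> integral\<^sup>L (PiM UNIV MM) (\<lambda>\<omega>. \<Prod>i\<in>J. f i (\<omega> i)) = (\<Prod>i\<in>J. integral\<^sup>L (MM i) (f i))"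
proof -
  let ?g = "\<lambda>x. \<Prod>i\<in>J. f i (x i)"
  have d: "distr (PiM UNIV MM) (PiM J MM) (\<lambda>x. restrict x J) = PiM J MM"
    using PP.distr_PiM_restrict_finite[OF J] by simp
  have ig: "integrable (PiM J MM) ?g" using PP.product_integrable_prod[OF J f] by simp
  have vg: "integral\<^sup>L (PiM J MM) ?g = (\<Prod>i\<in>J. integral\<^sup>L (MM i) (f i))"
    using PP.product_integral_prod[OF J f] by simp
  have mg: "?g \<in> borel_measurable (PiM J MM)" using ig by auto
  have mT: "(\<lambda>x. restrict x J) \<in> measurable (PiM UNIV MM) (PiM J MM)"
    by (rule measurable_restrict_subset) auto
  have eq: "\<And>\<omega>. ?g (restrict \<omega> J) = (\<Prod>i\<in>J. f i (\<omega> i))"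
    by (rule prod.cong) auto
  have "integrable (PiM UNIV MM) (\<lambda>\<omega>. ?g (restrict \<omega> J))"
    using ig d integrable_distr_eq[OF mT mg] by simp
  moreover have "integral\<^sup>L (PiM UNIV MM) (\<lambda>\<omega>. ?g (restrict \<omega> J)) = integral\<^sup>L (PiM J MM) ?g"
    using integral_distr[OF mT mg] d by simp
  ultimately show ?thesis using vg eq by simp
qed

lemma E2: "integrable noise_space (\<lambda>\<omega>. \<omega> p * \<omega> q)
   \<and> integral\<^sup>L noise_space (\<lambda>\<omega>. \<omega> p * \<omega> q) = (if p = q then vv p else 0)"
proof (cases "p = q")
  case True
  have "integrable (PiM UNIV MM) (\<lambda>\<omega>. \<Prod>i\<in>{p}. (\<lambda>x. x*x) (\<omega> i))
     \<and> integral\<^sup>L (PiM UNIV MM) (\<lambda>\<omega>. \<Prod>i\<in>{p}. (\<lambda>x. x*x) (\<omega> i)) = (\<Prod>i\<in>{p}. integral\<^sup>L (MM i) (\<lambda>x. x*x))"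
    by (rule prodint) (auto simp: mom2)
  then show ?thesis using True mom2[of p] by (simp add: NS)
next
  case False
  have "integrable (PiM UNIV MM) (\<lambda>\<omega>. \<Prod>i\<in>{p,q}. (\<lambda>x. x) (\<omega> i))
     \<and> integral\<^sup>L (PiM UNIV MM) (\<lambda>\<omega>. \<Prod>i\<in>{p,q}. (\<lambda>x. x) (\<omega> i)) = (\<Prod>i\<in>{p,q}. integral\<^sup>L (MM i) (\<lambda>x. x))"
    by (rule prodint) (auto simp: mom1)
  then show ?thesis using False mom1 by (simp add: NS)
qed



definition islin :: "((nat \<times> nat \<Rightarrow> real) \<Rightarrow> real) \<Rightarrow> bool" where
  "islin f \<longleftrightarrow> (\<exists>S c. finite S \<and> (\<forall>\<omega>. f \<omega> = (\<Sum>p\<in>S. c p * \<omega> p)))"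

lemma islin_coord: "islin (\<lambda>\<omega>. \<omega> q)"
  unfolding islin_def by (rule exI[of _ "{q}"], rule exI[of _ "\<lambda>_. 1"]) simp

lemma islin_zero: "islin (\<lambda>\<omega>. 0)"
  unfolding islin_def by (rule exI[of _ "{}"]) simp

lemma islin_scale: assumes "islin f" shows "islin (\<lambda>\<omega>. a * f \<omega>)"
proof -
  obtain S c where S: "finite S" "\<forall>\<omega>. f \<omega> = (\<Sum>p\<in>S. c p * \<omega> p)" using assms islin_def by auto
  have "\<forall>\<omega>. a * f \<omega> = (\<Sum>p\<in>S. (a * c p) * \<omega> p)"
    using S(2) by (simp add: sum_distrib_left mult.assoc)
  then show ?thesis unfolding islin_def using S(1) by (intro exI[of _ S] exI[of _ "\<lambda>p. a * c p"]) simp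
qed

lemma islin_add: assumes "islin f" "islin g" shows "islin (\<lambda>\<omega>. f \<omega> + g \<omega>)"
proof -
  obtain S c where S: "finite S" "\<forall>\<omega>. f \<omega> = (\<Sum>p\<in>S. c p * \<omega> p)" using assms(1) islin_def by auto
  obtain T d where T: "finite T" "\<forall>\<omega>. g \<omega> = (\<Sum>p\<in>T. d p * \<omega> p)" using assms(2) islin_def by auto
  let ?e = "\<lambda>p. (if p \<in> S then c p else 0) + (if p \<in> T then d p else 0)"
  have all: "\<forall>\<omega>. f \<omega> + g \<omega> = (\<Sum>p\<in>S \<union> T. ?e p * \<omega> p)"
  proof
    fix \<omega>
    have h1: "(\<Sum>p\<in>S \<union> T. (if p \<in> S then c p * \<omega> p else 0)) = (\<Sum>p\<in>(S \<union> T) \<inter> S. c p * \<omega> p)"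
      using S(1) T(1) by (subst sum.inter_restrict) auto
    have h3: "(S \<union> T) \<inter> S = S" "(S \<union> T) \<inter> T = T" by auto
    have h2: "(\<Sum>p\<in>S \<union> T. (if p \<in> T then d p * \<omega> p else 0)) = (\<Sum>p\<in>(S \<union> T) \<inter> T. d p * \<omega> p)"
      using S(1) T(1) by (subst sum.inter_restrict) auto
    have hx: "\<And>p. ?e p * \<omega> p = (if p \<in> S then c p * \<omega> p else 0) + (if p \<in> T then d p * \<omega> p else 0)"
      by (simp add: distrib_right)
    have "(\<Sum>p\<in>S \<union> T. ?e p * \<omega> p) = (\<Sum>p\<in>S \<union> T. (if p \<in> S then c p * \<omega> p else 0))
        + (\<Sum>p\<in>S \<union> T. (if p \<in> T then d p * \<omega> p else 0))"
      unfolding hx by (rule sum.distrib)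
    also have "\<dots> = (\<Sum>p\<in>S. c p * \<omega> p) + (\<Sum>p\<in>T. d p * \<omega> p)"
      unfolding h1 h2 h3 ..
    also have "\<dots> = f \<omega> + g \<omega>" using S(2) T(2) by metis
    finally show "f \<omega> + g \<omega> = (\<Sum>p\<in>S \<union> T. ?e p * \<omega> p)" by (rule sym)
  qed
  show ?thesis unfolding islin_def using S(1) T(1) all by (intro exI[of _ "S \<union> T"] exI[of _ ?e]) simp
qed

lemma islin_diff: "islin f \<Longrightarrow> islin g \<Longrightarrow> islin (\<lambda>\<omega>. f \<omega> - g \<omega>)"
  using islin_add[of f "\<lambda>\<omega>. (-1) * g \<omega>"] islin_scale[of g "-1"] by simp

lemma islin_sum: "finite K \<Longrightarrow> (\<And>k. k \<in> K \<Longrightarrow> islin (f k)) \<Longrightarrow> islin (\<lambda>\<omega>. \<Sum>k\<in>K. f k \<omega>)"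
  by (induction K rule: finite_induct) (auto intro: islin_zero islin_add)

lemma islin_div: "islin f \<Longrightarrow> islin (\<lambda>\<omega>. f \<omega> / a)"
  using islin_scale[of f "1/a"] by simp

lemma lin_int: assumes "islin f" "islin g" shows "integrable noise_space (\<lambda>\<omega>. f \<omega> * g \<omega>)"
proof -
  obtain S c where S: "finite S" "\<forall>\<omega>. f \<omega> = (\<Sum>p\<in>S. c p * \<omega> p)" using assms(1) islin_def by auto
  obtain T d where T: "finite T" "\<forall>\<omega>. g \<omega> = (\<Sum>p\<in>T. d p * \<omega> p)" using assms(2) islin_def by auto
  have eq: "(\<lambda>\<omega>. f \<omega> * g \<omega>) = (\<lambda>\<omega>. \<Sum>p\<in>S. \<Sum>q\<in>T. (c p * d q) * (\<omega> p * \<omega> q))"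
    using S T by (auto simp: sum_product mult_ac)
  have "\<And>p q. integrable noise_space (\<lambda>\<omega>. c p * d q * (\<omega> p * \<omega> q))"
    using E2 by auto
  then show ?thesis unfolding eq by auto
qed

lemma hgt_lin: "islin (\<lambda>\<omega>. hgt L \<omega> r i)"
proof (induction r arbitrary: i)
  case 0
  show ?case by (simp, intro islin_sum islin_diff islin_div islin_coord) auto
next
  case (Suc r)
  show ?case
    by (cases "even (i + int (Suc r))")
       (simp_all only: hgt.simps if_True if_False, auto intro!: islin_add islin_div islin_coord Suc)
qed

lemma int_lin_coord: "islin f \<Longrightarrow> integrable noise_space (\<lambda>\<omega>. f \<omega> * \<omega> q)"
  using lin_int[OF _ islin_coord] .

definition Cv :: "nat \<Rightarrow> nat \<Rightarrow> int \<Rightarrow> nat \<times> nat \<Rightarrow> real" where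
  "Cv L r i q = integral\<^sup>L noise_space (\<lambda>\<omega>. hgt L \<omega> r i * \<omega> q)"

lemma Ecoord: "integral\<^sup>L noise_space (\<lambda>\<omega>. \<omega> p * \<omega> q) = (if p = q then vv p else 0)"
  using E2 by blast

lemma Ecoord0: "integral\<^sup>L noise_space (\<lambda>\<omega>. \<omega> (0,m) * \<omega> q) = (if (0,m) = q then 1 else 0)"
  using E2[of "(0,m)" q] by (auto simp: vv_def)

lemma Cv_Suc: "Cv L (Suc r) i q = (if even (i + int (Suc r))
   then (Cv L r (i-1) q + Cv L r (i+1) q)/2 + (if (Suc r, site L i) = q then vv q else 0)
   else Cv L r i q)"
proof (cases "even (i + int (Suc r))")
  case True
  have e: "(\<lambda>\<omega>. hgt L \<omega> (Suc r) i * \<omega> q) = (\<lambda>\<omega>. (hgt L \<omega> r (i-1) * \<omega> q + hgt L \<omega> r (i+1) * \<omega> q)/2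
       + \<omega> (Suc r, site L i) * \<omega> q)"
    using True by (auto simp: algebra_simps add_divide_distrib)
  have i1: "integrable noise_space (\<lambda>\<omega>. hgt L \<omega> r (i-1) * \<omega> q)" by (rule int_lin_coord[OF hgt_lin])
  have i2: "integrable noise_space (\<lambda>\<omega>. hgt L \<omega> r (i+1) * \<omega> q)" by (rule int_lin_coord[OF hgt_lin])
  have i3: "integrable noise_space (\<lambda>\<omega>. \<omega> (Suc r, site L i) * \<omega> q)" using E2 by blast
  show ?thesis unfolding Cv_def e using True i1 i2 i3
    by (simp add: Ecoord integral_add integral_divide_zero)
qed (simp add: Cv_def)

lemma site_lt: "L > 0 \<Longrightarrow> site L i < L"
  unfolding site_def by (simp add: nat_less_iff)

lemma Cv_0: assumes L: "L > 0"
  shows "Cv L 0 i q = (if fst q = 0 \<and> snd q < site L i then 1 else 0)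
      - (if fst q = 0 \<and> snd q < L then real (site L i) / real L else 0)"
proof -
  let ?s = "site L i"
  have e: "(\<lambda>\<omega>. hgt L \<omega> 0 i * \<omega> q) = (\<lambda>\<omega>. \<Sum>k<?s. (\<omega> (0,k) * \<omega> q - (\<Sum>m<L. \<omega> (0,m) * \<omega> q) / real L))"
    by (auto simp: sum_distrib_right left_diff_distrib sum_divide_distrib)
  have im: "\<And>m. integrable noise_space (\<lambda>\<omega>. \<omega> (0,m) * \<omega> q)" using E2 by blast
  have "Cv L 0 i q = (\<Sum>k<?s. ((if (0,k) = q then 1 else 0) - (\<Sum>m<L. (if (0,m) = q then 1 else 0)) / real L))"
    unfolding Cv_def e
    by (simp add: im integral_sum integral_diff integral_divide_zero integrable_sum integrable_diff
        integrable_divide_zero Ecoord0)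
  also have "\<dots> = (\<Sum>k<?s. (if (0,k) = q then 1 else 0)) - real ?s * (\<Sum>m<L. (if (0,m) = q then 1 else 0)) / real L"
    by (simp add: sum_subtractf)
  also have "(\<Sum>k<?s. (if (0,k) = q then 1 else 0::real)) = (if fst q = 0 \<and> snd q < ?s then 1 else 0)"
    by (cases q) (auto simp: sum.delta)
  also have "(\<Sum>k<L. (if (0,k) = q then 1 else 0::real)) = (if fst q = 0 \<and> snd q < L then 1 else 0)"
    by (cases q) (auto simp: sum.delta)
  finally have "Cv L 0 i q = (if fst q = 0 \<and> snd q < ?s then 1 else 0) - real ?s * (if fst q = 0 \<and> snd q < L then 1 else 0) / real L" .
  then show ?thesis using site_lt[OF L, of i] by (cases "fst q = 0 \<and> snd q < L") auto
qed



definition bc :: "nat \<Rightarrow> int \<Rightarrow> real" where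
  "bc n k = (if k < 0 then 0 else real (n choose nat k))"

definition Bk :: "nat \<Rightarrow> int \<Rightarrow> real" where
  "Bk n i = bc n ((int n + i) div 2) / 2 ^ n"

lemma bc_Suc: "bc (Suc n) k = bc n (k - 1) + bc n k"
proof (cases "k \<le> 0")
  case True
  then show ?thesis by (cases "k = 0") (auto simp: bc_def)
next
  case False
  then have "nat k = Suc (nat (k - 1))" by simp
  then show ?thesis using False by (simp add: bc_def)
qed

lemma Bk_Suc: assumes "even (int n + 1 + i)"
  shows "Bk (Suc n) i = (Bk n (i - 1) + Bk n (i + 1)) / 2"
proof -
  define k where "k = (int n + 1 + i) div 2"
  have a: "(int (Suc n) + i) div 2 = k" by (simp add: k_def add.commute add.left_commute)
  have b: "(int n + (i - 1)) div 2 = k - 1" using assms unfolding k_def by presburger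
  have c: "(int n + (i + 1)) div 2 = k" unfolding k_def by (simp add: add.commute add.left_commute)
  show ?thesis unfolding Bk_def a b c bc_Suc by (simp add: field_simps)
qed

lemma Bk_0: "even i \<Longrightarrow> Bk 0 i = (if i = 0 then 1 else 0)"
  by (auto simp: Bk_def bc_def elim!: evenE)

lemma g11_Bk: assumes "even j" shows "g11 s j = 2 * Bk (2 * s) j"
proof -
  obtain m where m: "j = 2 * m" using assms by (auto elim: evenE)
  have k: "(int (2 * s) + j) div 2 = int s + m" using m by simp
  have jd: "j div 2 = m" using m by simp
  show ?thesis
  proof (cases "\<bar>j\<bar> \<le> 2 * int s")
    case True
    then have r: "0 \<le> int s + m" "int s + m \<le> 2 * int s" using m by auto
    have n1: "nat (int s + m) \<le> 2 * s" using r by linarith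
    have n2: "nat (int s - m) = 2 * s - nat (int s + m)" using r by linarith
    have "real ((2 * s) choose (nat (int s + m))) = fact (2 * s) / (fact (nat (int s + m)) * fact (2 * s - nat (int s + m)))"
      by (rule binomial_fact[OF n1])
    moreover have h4: "(2::real) ^ (2 * s) = 4 ^ s" by (simp add: power_mult)
    ultimately show ?thesis using True r unfolding g11_def Bk_def bc_def k jd n2 h4
      by (simp add: field_simps)
  next
    case False
    then have "int s + m < 0 \<or> nat (int s + m) > 2 * s" using m by auto
    then show ?thesis using False unfolding g11_def Bk_def bc_def k jd by auto
  qed
qed



definition Fd :: "nat \<Rightarrow> nat \<Rightarrow> int \<Rightarrow> real" where
  "Fd L r i = (Cv L r i (0,0) + Cv L r i (0,1) - Cv L r i (0,L-2) - Cv L r i (0,L-1))/4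
     + (Cv L r i (1,L-1) + Cv L r i (1,1))/2 + Cv L r i (2,0)"

definition ee :: "nat \<Rightarrow> nat \<Rightarrow> int \<Rightarrow> real" where
  "ee L r i = (if (r, site L i) = (1,L-1) then 1/4 else 0) + (if (r, site L i) = (1,1) then 1/4 else 0)
     + (if (r, site L i) = (2,0) then 1/2 else 0)"

lemma Fd_Suc: assumes L: "L \<ge> 4"
  shows "Fd L (Suc r) i = (if even (i + int (Suc r))
     then (Fd L r (i-1) + Fd L r (i+1))/2 + ee L (Suc r) i else Fd L r i)"
proof (cases "even (i + int (Suc r))")
  case True
  have ne: "L - 1 \<noteq> 1" using L by simp
  show ?thesis using True ne unfolding Fd_def ee_def Cv_Suc[of L r i]
    by (simp add: vv_def field_simps)
next
  case False
  then show ?thesis unfolding Fd_def Cv_Suc[of L r i] by simp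
qed

lemma Fd_0: assumes L: "L \<ge> 4"
  shows "Fd L 0 i = ((if 0 < site L i then 1 else 0) + (if 1 < site L i then 1 else 0)
     - (if L - 2 < site L i then 1 else 0) - (if L - 1 < site L i then 1 else 0)) / 4"
proof -
  have L0: "L > 0" using L by simp
  show ?thesis unfolding Fd_def Cv_0[OF L0] using L by (simp add: field_simps)
qed

lemma site_range:
  assumes L: "L \<ge> 4" and i: "\<bar>i\<bar> \<le> int L - 2"
  shows "(site L i = 0 \<longleftrightarrow> i = 0) \<and> (site L i = 1 \<longleftrightarrow> i = 1) \<and> (site L i = L - 1 \<longleftrightarrow> i = -1)
    \<and> (i = 0 \<or> i = 1 \<or> i = -1 \<or> (2 \<le> site L i \<and> site L i \<le> L - 2))"
proof (cases "i \<ge> 0")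
  case True
  then have "i mod int L = i" using i by (intro mod_pos_pos_trivial) auto
  then have s: "site L i = nat i" by (simp add: site_def)
  show ?thesis unfolding s using True i L by auto
next
  case False
  have "(i + int L) mod int L = i + int L" using i False by (intro mod_pos_pos_trivial) auto
  then have "i mod int L = i + int L" by simp
  then have s: "site L i = nat (i + int L)" by (simp add: site_def)
  show ?thesis unfolding s using False i L by auto
qed

lemma Fd0_val: assumes L: "L \<ge> 4" and i: "\<bar>i\<bar> \<le> int L - 2"
  shows "Fd L 0 i = (if i = 0 then 0 else if i = 1 \<or> i = -1 then 1/4 else 1/2)"
proof -
  note sr = site_range[OF L i]
  have "i = 0 \<or> i = 1 \<or> i = -1 \<or> (2 \<le> site L i \<and> site L i \<le> L - 2)" using sr by blast
  then show ?thesis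
  proof (elim disjE)
    assume "i = 0" then have "site L i = 0" using sr by simp
    then show ?thesis unfolding Fd_0[OF L] using \<open>i = 0\<close> by simp
  next
    assume "i = 1" then have "site L i = 1" using sr by simp
    then show ?thesis unfolding Fd_0[OF L] using \<open>i = 1\<close> L by simp
  next
    assume "i = -1" then have "site L i = L - 1" using sr by simp
    then show ?thesis unfolding Fd_0[OF L] using \<open>i = -1\<close> L by simp
  next
    assume a: "2 \<le> site L i \<and> site L i \<le> L - 2"
    then have "i \<noteq> 0 \<and> i \<noteq> 1 \<and> i \<noteq> -1" using sr L by auto
    have "\<not> (L - 1 < site L i)" "\<not> (L - 2 < site L i)" "0 < site L i" "1 < site L i" using a L by linarith+
    then show ?thesis unfolding Fd_0[OF L] using \<open>i \<noteq> 0 \<and> i \<noteq> 1 \<and> i \<noteq> -1\<close> by simp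
  qed
qed

lemma ee_val: assumes L: "L \<ge> 4" and i: "\<bar>i\<bar> \<le> int L - 2"
  shows "ee L r i = (if r = 1 \<and> (i = 1 \<or> i = -1) then 1/4 else 0) + (if r = 2 \<and> i = 0 then 1/2 else 0)"
proof -
  note sr = site_range[OF L i]
  have ne: "L - 1 \<noteq> 1" using L by simp
  show ?thesis unfolding ee_def using sr ne by auto
qed

lemma Fd1_val: assumes L: "L \<ge> 4" and i: "\<bar>i\<bar> \<le> int L - 3" and o: "odd i"
  shows "Fd L 1 i = 1/2"
proof -
  have e: "even (i + int (Suc 0))" using o by simp
  have a1: "\<bar>i - 1\<bar> \<le> int L - 2" "\<bar>i + 1\<bar> \<le> int L - 2" "\<bar>i\<bar> \<le> int L - 2" using i by auto
  have o1: "i - 1 \<noteq> 1 \<and> i - 1 \<noteq> -1" "i + 1 \<noteq> 1 \<and> i + 1 \<noteq> -1" using o by presburger+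
  have "Fd L 1 i = (Fd L 0 (i-1) + Fd L 0 (i+1))/2 + ee L 1 i"
    using Fd_Suc[OF L, of 0 i] e by simp
  then show ?thesis unfolding Fd0_val[OF L a1(1)] Fd0_val[OF L a1(2)] ee_val[OF L a1(3)] using o1
    by auto
qed

lemma Fd2_val: assumes L: "L \<ge> 4" and i: "\<bar>i\<bar> \<le> int L - 4" and ev: "even i"
  shows "Fd L 2 i = 1/2 + Bk 0 i / 2"
proof -
  have e: "even (i + int (Suc 1))" using ev by simp
  have a1: "\<bar>i - 1\<bar> \<le> int L - 3" "\<bar>i + 1\<bar> \<le> int L - 3" "\<bar>i\<bar> \<le> int L - 2" using i by auto
  have o1: "odd (i - 1)" "odd (i + 1)" using ev by auto
  have "Fd L 2 i = (Fd L 1 (i-1) + Fd L 1 (i+1))/2 + ee L 2 i"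
    using Fd_Suc[OF L, of 1 i] e by (simp add: numeral_2_eq_2)
  then show ?thesis unfolding Fd1_val[OF L a1(1) o1(1)] Fd1_val[OF L a1(2) o1(2)] ee_val[OF L a1(3)]
      Bk_0[OF ev] by auto
qed

lemma Fd_inv: assumes L: "L \<ge> 4" and r: "r \<ge> 2"
  shows "\<forall>i. even (i + int r) \<and> \<bar>i\<bar> + int r \<le> int L - 2 \<longrightarrow> Fd L r i = 1/2 + Bk (r - 2) i / 2"
  using r
proof (induction r rule: dec_induct)
  case base
  show ?case using Fd2_val[OF L] by auto
next
  case (step r)
  show ?case
  proof (intro allI impI)
    fix i assume a: "even (i + int (Suc r)) \<and> \<bar>i\<bar> + int (Suc r) \<le> int L - 2"
    have a1: "even (i - 1 + int r) \<and> \<bar>i - 1\<bar> + int r \<le> int L - 2"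
             "even (i + 1 + int r) \<and> \<bar>i + 1\<bar> + int r \<le> int L - 2" using a by auto
    have a2: "\<bar>i\<bar> \<le> int L - 2" using a by auto
    have "Fd L (Suc r) i = (Fd L r (i-1) + Fd L r (i+1))/2 + ee L (Suc r) i"
      using Fd_Suc[OF L, of r i] a by simp
    moreover have "ee L (Suc r) i = 0" unfolding ee_val[OF L a2] using step.hyps by auto
    moreover have "Fd L r (i-1) = 1/2 + Bk (r-2) (i-1) / 2" using step.IH a1(1) by blast
    moreover have "Fd L r (i+1) = 1/2 + Bk (r-2) (i+1) / 2" using step.IH a1(2) by blast
    moreover have "Bk (Suc r - 2) i = (Bk (r-2) (i - 1) + Bk (r-2) (i + 1)) / 2"
    proof -
      have h: "Suc r - 2 = Suc (r - 2)" using step.hyps by simp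
      have P: "even (int (r - 2) + 1 + i)" using a step.hyps by (simp add: of_nat_diff)
      show ?thesis unfolding h by (rule Bk_Suc[OF P])
    qed
    ultimately show "Fd L (Suc r) i = 1/2 + Bk (Suc r - 2) i / 2" by (simp add: field_simps)
  qed
qed

lemma Fd_final: assumes L: "L \<ge> 4" and t: "t \<ge> 1" and j: "even j"
  and b: "\<bar>j\<bar> + 2 * int t + 2 \<le> int L - 2"
  shows "Fd L (2*t+2) j - Fd L (2*t) j = - (1/4) * (g11 (t - 1) j - g11 t j)"
proof -
  have f1: "Fd L (2*t+2) j = 1/2 + Bk (2*t) j / 2"
    using Fd_inv[OF L, of "2*t+2"] j b by auto
  have f2: "Fd L (2*t) j = 1/2 + Bk (2*(t-1)) j / 2"
  proof -
    have "Fd L (2*t) j = 1/2 + Bk (2*t - 2) j / 2" using Fd_inv[OF L, of "2*t"] j b t by auto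
    moreover have "2*t - 2 = 2*(t-1)" by simp
    ultimately show ?thesis by simp
  qed
  show ?thesis unfolding f1 f2 g11_Bk[OF j] by (simp add: field_simps)
qed



lemma site_pos: "0 \<le> a \<Longrightarrow> a < int L \<Longrightarrow> site L a = nat a"
  unfolding site_def by simp

lemma site_neg: assumes "0 < a" "a < int L" shows "site L (-a) = nat (int L - a)"
proof -
  have "(-a + int L) mod int L = -a + int L" using assms by (intro mod_pos_pos_trivial) auto
  then have "(-a) mod int L = int L - a" by simp
  then show ?thesis unfolding site_def by simp
qed

lemma site_small: "L \<ge> 4 \<Longrightarrow> site L 0 = 0 \<and> site L 1 = 1 \<and> site L 2 = 2 \<and> site L (-1) = L - 1 \<and> site L (-2) = L - 2"
  using site_pos[of 0 L] site_pos[of 1 L] site_pos[of 2 L] site_neg[of 1 L] site_neg[of 2 L]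
  by auto

lemma D_ident: assumes L: "L \<ge> 4"
  shows "hgt L \<omega> 2 0 - hgt L \<omega> 0 0 =
    (\<omega> (0,0) + \<omega> (0,1) - \<omega> (0,L-2) - \<omega> (0,L-1))/4 + (\<omega> (1,L-1) + \<omega> (1,1))/2 + \<omega> (2,0)"
proof -
  define n where "n = L - 2"
  have n: "L = Suc (Suc n)" using L unfolding n_def by simp
  have n2: "n \<ge> 2" using L n by simp
  define m where "m = (\<Sum>k<L. \<omega> (0,k)) / real L"
  have sL: "(\<Sum>k<L. \<omega> (0,k)) = real L * m" using L unfolding m_def by simp
  have sL2: "(\<Sum>k<L. \<omega> (0,k)) = (\<Sum>k<n. \<omega> (0,k)) + \<omega> (0,L-2) + \<omega> (0,L-1)" unfolding n by simp
  have h0: "hgt L \<omega> 0 0 = 0" using site_small[OF L] by simp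
  have hm2: "hgt L \<omega> 0 (-2) = (\<Sum>k<n. \<omega> (0,k)) - real n * m"
    using site_small[OF L] n by (simp add: sum_subtractf m_def)
  have hp2: "hgt L \<omega> 0 2 = \<omega> (0,0) + \<omega> (0,1) - 2 * m"
    using site_small[OF L] by (simp add: m_def numeral_2_eq_2)
  have h1m: "hgt L \<omega> 1 (-1) = (hgt L \<omega> 0 (-2) + hgt L \<omega> 0 0)/2 + \<omega> (1, L-1)"
    using site_small[OF L] by (simp add: hgt.simps(2)[of L \<omega> 0, simplified])
  have h1p: "hgt L \<omega> 1 1 = (hgt L \<omega> 0 0 + hgt L \<omega> 0 2)/2 + \<omega> (1, 1)"
    using site_small[OF L] by (simp add: hgt.simps(2)[of L \<omega> 0, simplified])
  have h2: "hgt L \<omega> 2 0 = (hgt L \<omega> 1 (-1) + hgt L \<omega> 1 1)/2 + \<omega> (2, 0)"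
    using site_small[OF L] hgt.simps(2)[of L \<omega> 1 0] by (simp add: numeral_2_eq_2)
  have "real L * m = (\<Sum>k<n. \<omega> (0,k)) + \<omega> (0,L-2) + \<omega> (0,L-1)" using sL sL2 by simp
  moreover have "real L = real n + 2" using n by simp
  ultimately show ?thesis unfolding h2 h1m h1p h0 hm2 hp2 by (simp add: field_simps)
qed

lemma Edq: "integral\<^sup>L noise_space (\<lambda>\<omega>. (hgt L \<omega> a j - hgt L \<omega> b j) * \<omega> q) = Cv L a j q - Cv L b j q"
proof -
  have "(\<lambda>\<omega>. (hgt L \<omega> a j - hgt L \<omega> b j) * \<omega> q) = (\<lambda>\<omega>. hgt L \<omega> a j * \<omega> q - hgt L \<omega> b j * \<omega> q)"
    by (simp add: left_diff_distrib)
  then show ?thesis unfolding Cv_def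
    by (simp add: integral_diff int_lin_coord[OF hgt_lin])
qed

lemma int_main: assumes L: "L \<ge> 4"
  shows "integral\<^sup>L noise_space (\<lambda>\<omega>. (hgt L \<omega> a j - hgt L \<omega> b j) * (hgt L \<omega> 2 0 - hgt L \<omega> 0 0))
     = Fd L a j - Fd L b j"
proof -
  define X where "X = (\<lambda>q \<omega>. (hgt L \<omega> a j - hgt L \<omega> b j) * \<omega> q)"
  have iX: "\<And>q. integrable noise_space (X q)" unfolding X_def
    by (intro int_lin_coord islin_diff hgt_lin)
  have eX: "\<And>q. integral\<^sup>L noise_space (X q) = Cv L a j q - Cv L b j q" unfolding X_def by (rule Edq)
  have e: "(\<lambda>\<omega>. (hgt L \<omega> a j - hgt L \<omega> b j) * (hgt L \<omega> 2 0 - hgt L \<omega> 0 0)) =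
     (\<lambda>\<omega>. (X (0,0) \<omega> + X (0,1) \<omega> - X (0,L-2) \<omega> - X (0,L-1) \<omega>)/4 + (X (1,L-1) \<omega> + X (1,1) \<omega>)/2 + X (2,0) \<omega>)"
    unfolding X_def D_ident[OF L] by (simp add: fun_eq_iff field_simps)
  show ?thesis unfolding e Fd_def
    by (simp add: iX eX integral_add integral_diff integral_divide_zero field_simps)
qed

theorem proposition1:
  fixes t :: nat and j :: int
  assumes "t \<ge> 1" and "even j"
  shows "(\<forall>L. even L \<and> L \<ge> 2 \<longrightarrow>
            integrable noise_space
              (\<lambda>\<omega>. (hgt L \<omega> (2*t+2) j - hgt L \<omega> (2*t) j) * (hgt L \<omega> 2 0 - hgt L \<omega> 0 0)))
       \<and> ((\<lambda>n. integral\<^sup>L noise_space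
              (\<lambda>\<omega>. (hgt (2*n) \<omega> (2*t+2) j - hgt (2*n) \<omega> (2*t) j)
                   * (hgt (2*n) \<omega> 2 0 - hgt (2*n) \<omega> 0 0)))
           \<longlonglongrightarrow> - (1/4) * (g11 (t - 1) j - g11 t j))"
proof (intro conjI allI impI)
  fix L :: nat
  show "integrable noise_space
              (\<lambda>\<omega>. (hgt L \<omega> (2*t+2) j - hgt L \<omega> (2*t) j) * (hgt L \<omega> 2 0 - hgt L \<omega> 0 0))"
    by (intro lin_int islin_diff hgt_lin)
next
  define N where "N = nat (\<bar>j\<bar> + 2 * int t + 4) + 2"
  show "(\<lambda>n. integral\<^sup>L noise_space
              (\<lambda>\<omega>. (hgt (2*n) \<omega> (2*t+2) j - hgt (2*n) \<omega> (2*t) j)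
                   * (hgt (2*n) \<omega> 2 0 - hgt (2*n) \<omega> 0 0)))
           \<longlonglongrightarrow> - (1/4) * (g11 (t - 1) j - g11 t j)"
  proof (rule tendsto_eventually, rule eventually_sequentiallyI[of N])
    fix n assume n: "N \<le> n"
    have L: "2 * n \<ge> 4" using n unfolding N_def by linarith
    have b: "\<bar>j\<bar> + 2 * int t + 2 \<le> int (2 * n) - 2" using n unfolding N_def by linarith
    show "integral\<^sup>L noise_space
              (\<lambda>\<omega>. (hgt (2*n) \<omega> (2*t+2) j - hgt (2*n) \<omega> (2*t) j)
                   * (hgt (2*n) \<omega> 2 0 - hgt (2*n) \<omega> 0 0)) = - (1/4) * (g11 (t - 1) j - g11 t j)"
      unfolding int_main[OF L] using Fd_final[OF L assms b] .
  qed
qed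

end
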